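(* Let $\textnormal{R}\in\{\textnormal{CH},\textnormal{wCH}\}$ and let $\omega\in\Omega$ be any path. Then $I_\textnormal{R}(\omega)$ is the smallest interval forecast that $\omega$ is $\textnormal{R}$-random for; that is, $\omega$ is $\textnormal{R}$-random for $I_\textnormal{R}(\omega)$, and $I_\textnormal{R}(\omega)\subseteq I$ for every interval forecast $I$ that $\omega$ is $\textnormal{R}$-random for.
   Context: $\mathcal{X}=\{0,1\}$; $\Omega=\mathcal{X}^{\mathbb{N}}$ (paths $\omega=(\omega_1,\omega_2,\dots)$); $\mathbb{S}=\bigcup_{n\ge0}\mathcal X^n$ (situations), $|s|$ length, $\omega_{1:n}=(\omega_1,\dots,\omega_n)$, $\omega_{1:0}$ the empty string. $\mathcal I$: the set of nonempty closed intervals $I\subseteq[0,1]$ (interval forecasts). A path $\omega$ is CH-random (resp. wCH-random) for $I\in\mathcal I$ if for every recursive (resp. recursive and temporal, i.e. $S(s)$ depends only on $|s|$) selection process $S:\mathbb S\to\{0,1\}$ with $\lim_n\sum_{k=0}^{n-1}S(\omega_{1:k})=\infty$, we have $\min I\le\liminf_n\frac{\sum_{k=0}^{n-1}S(\omega_{1:k})\omega_{k+1}}{\sum_{k=0}^{n-1}S(\omega_{1:k})}\le\limsup_n\frac{\sum_{k=0}^{n-1}S(\omega_{1:k})\omega_{k+1}}{\sum_{k=0}^{n-1}S(\omega_{1:k})}\le\max I$. $\mathcal I_\textnormal{R}(\omega)=\{I\in\mathcal I:\omega\text{ is R-random for }I\}$ and $I_\textnormal{R}(\omega)=\bigcap_{I\in\mathcal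 I_\textnormal{R}(\omega)}I$. *)

theory Defs
  imports "HOL-Analysis.Analysis" "HOL-Library.Extended_Real"
begin

datatype recf = Zero | Succ | Proj nat | Comp recf "recf list" | Prim recf recf | Mu recf

inductive eval :: "recf \<Rightarrow> nat list \<Rightarrow> nat \<Rightarrow> bool" where
  eval_Zero: "eval Zero xs 0"
| eval_Succ: "eval Succ (x # xs) (Suc x)"
| eval_Proj: "i < length xs \<Longrightarrow> eval (Proj i) xs (xs ! i)"
| eval_Comp: "list_all2 (\<lambda>g y. eval g xs y) gs ys \<Longrightarrow> eval f ys z \<Longrightarrow> eval (Comp f gs) xs z"
| eval_Prim0: "eval f xs y \<Longrightarrow> eval (Prim f g) (0 # xs) y"
| eval_PrimS: "eval (Prim f g) (n # xs) y \<Longrightarrow> eval g (y # n # xs) z \<Longrightarrow> eval (Prim f g) (Suc n # xs) z"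
| eval_Mu: "eval f (n # xs) 0 \<Longrightarrow> (\<forall>m<n. \<exists>y. y > 0 \<and> eval f (m # xs) y) \<Longrightarrow> eval (Mu f) xs n"

text \<open>Situations are finite bit strings (bool list, True = 1); a path is
  omega :: nat \<Rightarrow> bool where omega k is the paper's omega_(k+1).\<close>

fun code_sit :: "bool list \<Rightarrow> nat" where
  "code_sit [] = 1"
| "code_sit (b # s) = 2 * code_sit s + (if b then 1 else 0)"

text \<open>A situation is encoded by reading it in reverse as binary with a leading 1
  (injective, computable encoding).\<close>
definition code :: "bool list \<Rightarrow> nat" where
  "code s = code_sit (rev s)"

definition recursive_sel :: "(bool list \<Rightarrow> bool) \<Rightarrow> bool" where
  "recursive_sel S \<longleftrightarrow> (\<exists>r. \<forall>s. eval r [code s] (if S s then 1 else 0))"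

definition temporal_sel :: "(bool list \<Rightarrow> bool) \<Rightarrow> bool" where
  "temporal_sel S \<longleftrightarrow> (\<forall>s t. length s = length t \<longrightarrow> S s = S t)"

datatype randomness = CH | wCH

definition admissible :: "randomness \<Rightarrow> (bool list \<Rightarrow> bool) \<Rightarrow> bool" where
  "admissible R S \<longleftrightarrow> recursive_sel S \<and> (R = wCH \<longrightarrow> temporal_sel S)"

definition prefix :: "(nat \<Rightarrow> bool) \<Rightarrow> nat \<Rightarrow> bool list" where
  "prefix \<omega> n = map \<omega> [0..<n]"

definition sel_count :: "(bool list \<Rightarrow> bool) \<Rightarrow> (nat \<Rightarrow> bool) \<Rightarrow> nat \<Rightarrow> real" where
  "sel_count S \<omega> n = (\<Sum>k<n. if S (prefix \<omega> k) then 1 else 0)"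

definition sel_ones :: "(bool list \<Rightarrow> bool) \<Rightarrow> (nat \<Rightarrow> bool) \<Rightarrow> nat \<Rightarrow> real" where
  "sel_ones S \<omega> n = (\<Sum>k<n. if S (prefix \<omega> k) \<and> \<omega> k then 1 else 0)"

definition sel_freq :: "(bool list \<Rightarrow> bool) \<Rightarrow> (nat \<Rightarrow> bool) \<Rightarrow> nat \<Rightarrow> real" where
  "sel_freq S \<omega> n = sel_ones S \<omega> n / sel_count S \<omega> n"

definition interval_forecasts :: "real set set" where
  "interval_forecasts = {I. \<exists>a b. 0 \<le> a \<and> a \<le> b \<and> b \<le> 1 \<and> I = {a..b}}"

definition is_random :: "randomness \<Rightarrow> (nat \<Rightarrow> bool) \<Rightarrow> real set \<Rightarrow> bool" where
  "is_random R \<omega> I \<longleftrightarrow>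
     (\<forall>S. admissible R S \<and> filterlim (sel_count S \<omega>) at_top sequentially \<longrightarrow>
        ereal (Inf I) \<le> liminf (\<lambda>n. ereal (sel_freq S \<omega> n)) \<and>
        liminf (\<lambda>n. ereal (sel_freq S \<omega> n)) \<le> limsup (\<lambda>n. ereal (sel_freq S \<omega> n)) \<and>
        limsup (\<lambda>n. ereal (sel_freq S \<omega> n)) \<le> ereal (Sup I))"

definition random_forecasts :: "randomness \<Rightarrow> (nat \<Rightarrow> bool) \<Rightarrow> real set set" where
  "random_forecasts R \<omega> = {I \<in> interval_forecasts. is_random R \<omega> I}"

definition I_R :: "randomness \<Rightarrow> (nat \<Rightarrow> bool) \<Rightarrow> real set" where
  "I_R R \<omega> = \<Inter> (random_forecasts R \<omega>)"

end

theory Submission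
  imports Defs
begin

lemma freq_bounds: "0 \<le> sel_freq S \<omega> n \<and> sel_freq S \<omega> n \<le> 1"
proof -
  have le: "sel_ones S \<omega> n \<le> sel_count S \<omega> n"
    unfolding sel_ones_def sel_count_def by (rule sum_mono) auto
  have nn: "0 \<le> sel_ones S \<omega> n"
    unfolding sel_ones_def by (rule sum_nonneg) auto
  show ?thesis
    using le nn unfolding sel_freq_def
    by (cases "sel_count S \<omega> n = 0") (auto simp: divide_le_eq_1)
qed

lemma lim_bounds:
  "0 \<le> liminf (\<lambda>n. ereal (sel_freq S \<omega> n)) \<and>
   liminf (\<lambda>n. ereal (sel_freq S \<omega> n)) \<le> limsup (\<lambda>n. ereal (sel_freq S \<omega> n)) \<and>
   limsup (\<lambda>n. ereal (sel_freq S \<omega> n)) \<le> 1"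
proof (intro conjI)
  show "0 \<le> liminf (\<lambda>n. ereal (sel_freq S \<omega> n))"
    by (rule Liminf_bounded) (use freq_bounds in auto)
  show "limsup (\<lambda>n. ereal (sel_freq S \<omega> n)) \<le> 1"
    by (rule Limsup_bounded) (use freq_bounds in auto)
  show "liminf (\<lambda>n. ereal (sel_freq S \<omega> n)) \<le> limsup (\<lambda>n. ereal (sel_freq S \<omega> n))"
    by (rule Liminf_le_Limsup) simp
qed

lemma all_admissible: "admissible R (\<lambda>_. True)"
proof -
  have "\<forall>s. eval (Comp Succ [Zero]) [code s] (if True then 1 else 0)"
  proof
    fix s
    have "list_all2 (\<lambda>g y. eval g [code s] y) [Zero] [0]"
      by (auto intro: eval_Zero)
    moreover have "eval Succ [0] 1" using eval_Succ[of 0 "[]"] by simp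
    ultimately show "eval (Comp Succ [Zero]) [code s] (if True then 1 else 0)"
      by (auto intro: eval_Comp)
  qed
  then show ?thesis unfolding admissible_def recursive_sel_def temporal_sel_def by blast
qed

lemma all_diverges: "filterlim (sel_count (\<lambda>_. True) \<omega>) at_top sequentially"
proof -
  have "sel_count (\<lambda>_. True) \<omega> = (\<lambda>n. real n)"
    by (rule ext) (simp add: sel_count_def)
  then show ?thesis by (simp add: filterlim_real_sequentially)
qed

theorem proposition2:
  fixes R :: randomness and \<omega> :: "nat \<Rightarrow> bool"
  shows "I_R R \<omega> \<in> interval_forecasts \<and> is_random R \<omega> (I_R R \<omega>) \<and>
         (\<forall>I \<in> interval_forecasts. is_random R \<omega> I \<longrightarrow> I_R R \<omega> \<subseteq> I)"
proof -
  define A where "A = {S. admissible R S \<and> filterlim (sel_count S \<omega>) at_top sequentially}"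
  define Lf where "Lf S = liminf (\<lambda>n. ereal (sel_freq S \<omega> n))" for S
  define Uf where "Uf S = limsup (\<lambda>n. ereal (sel_freq S \<omega> n))" for S
  define L where "L = (INF S\<in>A. Lf S)"
  define U where "U = (SUP S\<in>A. Uf S)"
  have S0: "(\<lambda>_. True) \<in> A" unfolding A_def using all_admissible all_diverges by blast
  have b: "0 \<le> Lf S" "Lf S \<le> Uf S" "Uf S \<le> 1" for S
    using lim_bounds[of S \<omega>] unfolding Lf_def Uf_def by auto
  have L0: "0 \<le> L" unfolding L_def using b by (auto intro: INF_greatest)
  have U1: "U \<le> 1" unfolding U_def using b by (auto intro: SUP_least)
  have LU: "L \<le> U"
  proof -
    have "L \<le> Lf (\<lambda>_. True)" unfolding L_def using S0 by (rule INF_lower)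
    also have "\<dots> \<le> Uf (\<lambda>_. True)" by (rule b)
    also have "\<dots> \<le> U" unfolding U_def using S0 by (rule SUP_upper)
    finally show ?thesis .
  qed
  define l where "l = real_of_ereal L"
  define u where "u = real_of_ereal U"
  have Ll: "ereal l = L" unfolding l_def using L0 LU U1
    by (intro ereal_real') auto
  have Uu: "ereal u = U" unfolding u_def using L0 LU U1
    by (intro ereal_real') auto
  have l0: "0 \<le> l" and lu: "l \<le> u" and u1: "u \<le> 1"
    using L0 LU U1 unfolding Ll[symmetric] Uu[symmetric] by auto
  define J where "J = {l..u}"
  have JI: "J \<in> interval_forecasts" unfolding interval_forecasts_def J_def
    using l0 lu u1 by blast
  have infJ: "Inf J = l" and supJ: "Sup J = u" unfolding J_def using lu by auto
  have Jr: "is_random R \<omega> J"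
    unfolding is_random_def
  proof (intro allI impI conjI)
    fix S assume "admissible R S \<and> filterlim (sel_count S \<omega>) at_top sequentially"
    then have SA: "S \<in> A" unfolding A_def by blast
    show "ereal (Inf J) \<le> liminf (\<lambda>n. ereal (sel_freq S \<omega> n))"
      using INF_lower[OF SA, of Lf] unfolding infJ Ll L_def Lf_def .
    show "limsup (\<lambda>n. ereal (sel_freq S \<omega> n)) \<le> ereal (Sup J)"
      using SUP_upper[OF SA, of Uf] unfolding supJ Uu U_def Uf_def .
    show "liminf (\<lambda>n. ereal (sel_freq S \<omega> n)) \<le> limsup (\<lambda>n. ereal (sel_freq S \<omega> n))"
      using b(2) unfolding Lf_def Uf_def .
  qed
  have Jmin: "J \<subseteq> I" if IF: "I \<in> interval_forecasts" and IR: "is_random R \<omega> I" for I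
  proof -
    obtain a c where ac: "a \<le> c" "I = {a..c}" using IF unfolding interval_forecasts_def by blast
    have ia: "Inf I = a" and sc: "Sup I = c" using ac by auto
    have key: "ereal a \<le> Lf S \<and> Uf S \<le> ereal c" if "S \<in> A" for S
    proof -
      have "admissible R S \<and> filterlim (sel_count S \<omega>) at_top sequentially"
        using that unfolding A_def by blast
      moreover have "\<forall>S. admissible R S \<and> filterlim (sel_count S \<omega>) at_top sequentially \<longrightarrow>
        ereal (Inf I) \<le> liminf (\<lambda>n. ereal (sel_freq S \<omega> n)) \<and>
        liminf (\<lambda>n. ereal (sel_freq S \<omega> n)) \<le> limsup (\<lambda>n. ereal (sel_freq S \<omega> n)) \<and>
        limsup (\<lambda>n. ereal (sel_freq S \<omega> n)) \<le> ereal (Sup I)"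
        using \<open>is_random R \<omega> I\<close> unfolding is_random_def .
      ultimately show ?thesis using ia sc unfolding Lf_def Uf_def by simp
    qed
    have "ereal a \<le> L" unfolding L_def using key by (intro INF_greatest) blast
    moreover have "U \<le> ereal c" unfolding U_def using key by (intro SUP_least) blast
    ultimately have "a \<le> l" "u \<le> c" using Ll Uu by auto
    then show ?thesis unfolding J_def ac by auto
  qed
  have "I_R R \<omega> = J"
  proof
    show "I_R R \<omega> \<subseteq> J" unfolding I_R_def random_forecasts_def using JI Jr by blast
    show "J \<subseteq> I_R R \<omega>" unfolding I_R_def random_forecasts_def using Jmin by blast
  qed
  then show ?thesis using JI Jr Jmin by simp
qed

end
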